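(* Run the Unbiased Space Saving sketch with $m$ bins on an i.i.d. stream of items drawn from a discrete distribution with probabilities $p_1 \ge p_2 \ge \cdots$. If $p_1 < 1/m$, then with probability $1$, for all sufficiently large $t$, $0 \le t/m - \hat{N}_{min}(t) \le m(\log t)^2 + m$ and $0 \le \hat{N}_{max}(t) - t/m \le (\log t)^2 + 1$.
   Context: Unbiased Space Saving sketch with $m$ bins: maintain $m$ bins, each an (item, count) pair, counts initialized to $0$. For each new row with item $x_{new}$: if $x_{new}$ is the label of a bin, increment its count by $1$; otherwise choose a bin with the smallest count $\hat{N}_{min}$ (uniformly at random among all bins sharing the smallest count), increment its count by $1$, and with probability $1/(\hat{N}_{min}+1)$ replace its label by $x_{new}$. $\hat{N}_{min}(t)$ and $\hat{N}_{max}(t)$ are the smallest and largest bin counts after $t$ rows. *)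

theory Defs
  imports "HOL-Probability.Probability"
begin

text \<open>Items are natural numbers (item i has
probability p_i).  A state assigns to each bin index j < m a pair
(label, count); the label is None before the bin has ever been labelled.

All randomness is carried by an i.i.d. stream of triples (x, u, v):
x is the new item, u (uniform on [0,1]) selects uniformly among the bins
of smallest count (the floor(u*k)-th of the k tied bins, in index order),
and v (uniform on [0,1]) realises the replacement coin, which succeeds
iff v < 1/(Nmin+1).\<close>

type_synonym uss_state = "nat \<Rightarrow> nat option \<times> nat"

definition uss_init :: uss_state where
  "uss_init = (\<lambda>j. (None, 0))"

definition uss_min :: "nat \<Rightarrow> uss_state \<Rightarrow> nat" where
  "uss_min m s = Min ((\<lambda>j. snd (s j)) ` {..<m})"

definition uss_max :: "nat \<Rightarrow> uss_state \<Rightarrow> nat" where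
  "uss_max m s = Max ((\<lambda>j. snd (s j)) ` {..<m})"

definition uss_step :: "nat \<Rightarrow> uss_state \<Rightarrow> nat \<times> real \<times> real \<Rightarrow> uss_state" where
  "uss_step m s xuv =
     (let (x, u, v) = xuv;
          J = {j. j < m \<and> fst (s j) = Some x}
      in if J \<noteq> {} then
           (let j = Min J in s(j := (fst (s j), snd (s j) + 1)))
         else
           (let nmin = uss_min m s;
                T = sorted_list_of_set {j. j < m \<and> snd (s j) = nmin};
                k = length T;
                j = T ! min (k - 1) (nat \<lfloor>u * real k\<rfloor>);
                lbl = (if v < 1 / (real nmin + 1) then Some x else fst (s j))
            in s(j := (lbl, nmin + 1))))"

primrec uss_state_at :: "nat \<Rightarrow> (nat \<times> real \<times> real) stream \<Rightarrow> nat \<Rightarrow> uss_state" where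
  "uss_state_at m \<omega> 0 = uss_init"
| "uss_state_at m \<omega> (Suc t) = uss_step m (uss_state_at m \<omega> t) (\<omega> !! t)"

definition Nmin :: "nat \<Rightarrow> (nat \<times> real \<times> real) stream \<Rightarrow> nat \<Rightarrow> nat" where
  "Nmin m \<omega> t = uss_min m (uss_state_at m \<omega> t)"

definition Nmax :: "nat \<Rightarrow> (nat \<times> real \<times> real) stream \<Rightarrow> nat \<Rightarrow> nat" where
  "Nmax m \<omega> t = uss_max m (uss_state_at m \<omega> t)"

definition uss_row_measure :: "nat pmf \<Rightarrow> (nat \<times> real \<times> real) measure" where
  "uss_row_measure P = measure_pmf P \<Otimes>\<^sub>M
     (uniform_measure lborel {0..1::real} \<Otimes>\<^sub>M uniform_measure lborel {0..1::real})"

end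

theory Submission
  imports Defs
begin


lemma step_cases:
  assumes "m > 0"
  shows "\<exists>j<m. \<exists>l. uss_step m s (x,u,v) = s(j := (l, snd (s j) + 1)) \<and>
     ((l = fst (s j) \<and> fst (s j) = Some x) \<or> snd (s j) = uss_min m s)"
proof (cases "{j. j < m \<and> fst (s j) = Some x} = {}")
  case False
  define J where "J = {j. j < m \<and> fst (s j) = Some x}"
  have fin: "finite J" unfolding J_def by auto
  have "J \<noteq> {}" using False J_def by auto
  then have "Min J \<in> J" using fin Min_in by blast
  have eq: "uss_step m s (x,u,v) = s(Min J := (fst (s (Min J)), snd (s (Min J)) + 1))"
    using False by (simp add: uss_step_def Let_def J_def)
  show ?thesis using \<open>Min J \<in> J\<close>
    by (intro exI[of _ "Min J"]) (auto simp: eq J_def)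
next
  case True
  define S where "S = {j. j < m \<and> snd (s j) = uss_min m s}"
  have finS: "finite S" unfolding S_def by auto
  have "uss_min m s \<in> (\<lambda>j. snd (s j)) ` {..<m}"
    unfolding uss_min_def using assms by (intro Min_in) auto
  then have "S \<noteq> {}" unfolding S_def by auto
  define T where "T = sorted_list_of_set S"
  have setT: "set T = S" "length T = card S" using finS by (auto simp: T_def)
  have "card S > 0" using finS \<open>S \<noteq> {}\<close> by (simp add: card_gt_0_iff)
  define i where "i = min (length T - 1) (nat \<lfloor>u * real (length T)\<rfloor>)"
  have "i < length T" using setT \<open>card S > 0\<close> unfolding i_def by auto
  then have "T ! i \<in> S" using setT(1) nth_mem by blast
  have eq: "uss_step m s (x,u,v) = s(T ! i := (if v < 1 / (real (uss_min m s) + 1) then Some x else fst (s (T ! i)), uss_min m s + 1))"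
    using True by (simp add: uss_step_def Let_def S_def[symmetric] T_def[symmetric] i_def setT(2)) blast
  show ?thesis using \<open>T ! i \<in> S\<close>
    by (intro exI[of _ "T ! i"]) (auto simp: eq S_def)
qed

lemma sum_upd:
  fixes s :: uss_state and m :: nat
  assumes "j < m"
  shows "(\<Sum>i<m. snd ((s(j := (l, c))) i)) + snd (s j) = (\<Sum>i<m. snd (s i)) + c"
proof -
  have "(\<Sum>i<m. snd ((s(j := (l, c))) i)) = snd ((s(j := (l, c))) j) + (\<Sum>i\<in>{..<m} - {j}. snd ((s(j := (l, c))) i))"
    using assms by (subst sum.remove[of _ j]) auto
  also have "(\<Sum>i\<in>{..<m} - {j}. snd ((s(j := (l, c))) i)) = (\<Sum>i\<in>{..<m} - {j}. snd (s i))"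
    by (intro sum.cong) auto
  also have "(\<Sum>i<m. snd (s i)) = snd (s j) + (\<Sum>i\<in>{..<m} - {j}. snd (s i))"
    using assms by (subst sum.remove[of _ j]) auto
  ultimately show ?thesis by simp
qed

lemma sum_inv:
  assumes "m > 0"
  shows "(\<Sum>j<m. snd (uss_state_at m \<omega> t j)) = t"
proof (induction t)
  case 0
  then show ?case by (simp add: uss_init_def)
next
  case (Suc t)
  obtain x u v where xuv: "\<omega> !! t = (x, u, v)" by (cases "\<omega> !! t") auto
  obtain j l where j: "j < m" and eq: "uss_step m (uss_state_at m \<omega> t) (x,u,v) = (uss_state_at m \<omega> t)(j := (l, snd (uss_state_at m \<omega> t j) + 1))"
    using step_cases[OF assms, of "uss_state_at m \<omega> t" x u v] by blast
  show ?case using sum_upd[OF j, of "uss_state_at m \<omega> t" l "snd (uss_state_at m \<omega> t j) + 1"] Suc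
    by (simp add: xuv eq)
qed

lemma min_le_sum:
  fixes s :: uss_state
  assumes "m > 0"
  shows "m * uss_min m s \<le> (\<Sum>j<m. snd (s j))" "(\<Sum>j<m. snd (s j)) \<le> m * uss_max m s"
proof -
  have "(\<Sum>j<m. uss_min m s) \<le> (\<Sum>j<m. snd (s j))"
    unfolding uss_min_def by (intro sum_mono) auto
  then show "m * uss_min m s \<le> (\<Sum>j<m. snd (s j))" by simp
  have "(\<Sum>j<m. snd (s j)) \<le> (\<Sum>j<m. uss_max m s)"
    unfolding uss_max_def by (intro sum_mono) auto
  then show "(\<Sum>j<m. snd (s j)) \<le> m * uss_max m s" by simp
qed

lemma step_facts:
  assumes "m > 0" "j < m"
  shows "snd (uss_state_at m \<omega> (Suc t) j) \<le> snd (uss_state_at m \<omega> t j) + 1"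
    and "snd (uss_state_at m \<omega> t j) \<noteq> uss_min m (uss_state_at m \<omega> t) \<Longrightarrow>
         fst (uss_state_at m \<omega> (Suc t) j) = fst (uss_state_at m \<omega> t j) \<and>
         snd (uss_state_at m \<omega> (Suc t) j) \<le> snd (uss_state_at m \<omega> t j) +
            (if fst (uss_state_at m \<omega> t j) = Some (fst (\<omega> !! t)) then 1 else 0)"
proof -
  obtain x u v where xuv: "\<omega> !! t = (x, u, v)" by (cases "\<omega> !! t") auto
  obtain k l where k: "k < m" and eq: "uss_step m (uss_state_at m \<omega> t) (x,u,v) = (uss_state_at m \<omega> t)(k := (l, snd (uss_state_at m \<omega> t k) + 1))"
    and c: "(l = fst (uss_state_at m \<omega> t k) \<and> fst (uss_state_at m \<omega> t k) = Some x) \<or> snd (uss_state_at m \<omega> t k) = uss_min m (uss_state_at m \<omega> t)"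
    using step_cases[OF assms(1), of "uss_state_at m \<omega> t" x u v] by blast
  show "snd (uss_state_at m \<omega> (Suc t) j) \<le> snd (uss_state_at m \<omega> t j) + 1"
    by (simp add: xuv eq)
  assume "snd (uss_state_at m \<omega> t j) \<noteq> uss_min m (uss_state_at m \<omega> t)"
  then show "fst (uss_state_at m \<omega> (Suc t) j) = fst (uss_state_at m \<omega> t j) \<and>
         snd (uss_state_at m \<omega> (Suc t) j) \<le> snd (uss_state_at m \<omega> t j) +
            (if fst (uss_state_at m \<omega> t j) = Some (fst (\<omega> !! t)) then 1 else 0)"
    using c by (cases "j = k") (auto simp: xuv eq)
qed

definition Ycnt :: "(nat \<times> real \<times> real) stream \<Rightarrow> nat option \<Rightarrow> nat \<Rightarrow> nat \<Rightarrow> nat" where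
  "Ycnt \<omega> lab a t = (\<Sum>\<tau>\<in>{a..<t}. if lab = Some (fst (\<omega> !! \<tau>)) then 1 else 0)"

lemma key_det:
  assumes "m > 0" "j < m"
  shows "\<exists>a\<le>t. real (snd (uss_state_at m \<omega> t j)) \<le> real a / real m + 1 + real (Ycnt \<omega> (fst (uss_state_at m \<omega> t j)) a t)"
proof (induction t)
  case 0
  then show ?case by (auto simp: uss_init_def)
next
  case (Suc t)
  let ?c = "\<lambda>t. snd (uss_state_at m \<omega> t j)"
  let ?l = "\<lambda>t. fst (uss_state_at m \<omega> t j)"
  show ?case
  proof (cases "real (?c t) \<le> real t / real m")
    case True
    have "real (?c (Suc t)) \<le> real (?c t) + 1" using step_facts(1)[OF assms, of \<omega> t] by linarith
    also have "\<dots> \<le> real (Suc t) / real m + 1" using True assms(1)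
      by (smt (verit) divide_right_mono of_nat_0_le_iff of_nat_Suc)
    finally show ?thesis by (intro exI[of _ "Suc t"]) (simp add: Ycnt_def)
  next
    case False
    have "m * uss_min m (uss_state_at m \<omega> t) \<le> t"
      using min_le_sum(1)[OF assms(1), of "uss_state_at m \<omega> t"] sum_inv[OF assms(1), of \<omega> t] by simp
    then have "real (uss_min m (uss_state_at m \<omega> t)) * real m \<le> real t"
      by (metis mult.commute of_nat_le_iff of_nat_mult)
    then have "real (uss_min m (uss_state_at m \<omega> t)) \<le> real t / real m"
      using assms(1) by (simp add: le_divide_eq)
    then have ne: "?c t \<noteq> uss_min m (uss_state_at m \<omega> t)" using False by auto
    note sf = step_facts(2)[OF assms ne]
    from Suc.IH obtain a where a: "a \<le> t" "real (?c t) \<le> real a / real m + 1 + real (Ycnt \<omega> (?l t) a t)"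
      by blast
    have Y: "Ycnt \<omega> (?l t) a (Suc t) = Ycnt \<omega> (?l t) a t + (if ?l t = Some (fst (\<omega> !! t)) then 1 else 0)"
      unfolding Ycnt_def using a(1) by (simp add: sum.atLeastLessThan_Suc)
    show ?thesis
      apply (intro exI[of _ a])
      using a sf Y by (auto split: if_splits)
  qed
qed

definition Xc :: "(nat \<times> real \<times> real) stream \<Rightarrow> nat \<Rightarrow> nat \<Rightarrow> nat \<Rightarrow> nat" where
  "Xc \<omega> l a n = (\<Sum>i<n. if fst (\<omega> !! (a + i)) = l then 1 else 0)"

lemma Ycnt_Xc: "a \<le> t \<Longrightarrow> Ycnt \<omega> (Some l) a t = Xc \<omega> l a (t - a)"
  unfolding Ycnt_def Xc_def
  by (subst sum.atLeastLessThan_shift_0) (auto simp: atLeast0LessThan intro!: sum.cong)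

lemma bin_bound:
  assumes "m > 0" "j < m" "L \<ge> 0"
    and good: "\<forall>a\<le>t. \<forall>l. real (Xc \<omega> l a (t - a)) \<le> real (t - a) / real m + L"
  shows "real (snd (uss_state_at m \<omega> t j)) \<le> real t / real m + L + 1"
proof -
  obtain a where a: "a \<le> t" "real (snd (uss_state_at m \<omega> t j)) \<le> real a / real m + 1 + real (Ycnt \<omega> (fst (uss_state_at m \<omega> t j)) a t)"
    using key_det[OF assms(1,2)] by blast
  have "real a / real m \<le> real t / real m" using a(1) assms(1) by (simp add: divide_right_mono)
  show ?thesis
  proof (cases "fst (uss_state_at m \<omega> t j)")
    case None
    then have "Ycnt \<omega> (fst (uss_state_at m \<omega> t j)) a t = 0" by (simp add: Ycnt_def)
    then show ?thesis using a \<open>real a / real m \<le> real t / real m\<close> assms(3) by simp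
  next
    case (Some l)
    then have "Ycnt \<omega> (fst (uss_state_at m \<omega> t j)) a t = Xc \<omega> l a (t - a)" using Ycnt_Xc a(1) by simp
    moreover have "real (Xc \<omega> l a (t - a)) \<le> real (t - a) / real m + L" using good a(1) by blast
    moreover have "real a / real m + real (t - a) / real m = real t / real m"
      using a(1) by (simp add: add_divide_distrib[symmetric] of_nat_diff)
    ultimately show ?thesis using a by linarith
  qed
qed

lemma det_final:
  assumes "m > 0" "L \<ge> 0"
    and good: "\<forall>a\<le>t. \<forall>l. real (Xc \<omega> l a (t - a)) \<le> real (t - a) / real m + L"
  shows "0 \<le> real t / real m - real (Nmin m \<omega> t)
             \<and> real t / real m - real (Nmin m \<omega> t) \<le> real m * L + real m
             \<and> 0 \<le> real (Nmax m \<omega> t) - real t / real m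
             \<and> real (Nmax m \<omega> t) - real t / real m \<le> L + 1"
proof -
  let ?s = "uss_state_at m \<omega> t"
  have sum: "(\<Sum>j<m. real (snd (?s j))) = real t"
    using sum_inv[OF assms(1), of \<omega> t] by (metis of_nat_sum)
  have mn: "real m * real (Nmin m \<omega> t) \<le> real t" and mx: "real t \<le> real m * real (Nmax m \<omega> t)"
    using min_le_sum[OF assms(1), of ?s] sum_inv[OF assms(1), of \<omega> t]
    unfolding Nmin_def Nmax_def by (metis of_nat_le_iff of_nat_mult)+
  have 1: "0 \<le> real t / real m - real (Nmin m \<omega> t)" using mn assms(1)
    by (simp add: le_divide_eq mult.commute)
  have 3: "0 \<le> real (Nmax m \<omega> t) - real t / real m" using mx assms(1)
    by (simp add: divide_le_eq mult.commute)
  have bb: "\<And>j. j < m \<Longrightarrow> real (snd (?s j)) \<le> real t / real m + L + 1"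
    using bin_bound[OF assms(1) _ assms(2) good] by blast
  have "Nmax m \<omega> t \<in> (\<lambda>j. snd (?s j)) ` {..<m}"
    unfolding Nmax_def uss_max_def using assms(1) by (intro Max_in) auto
  then have 4: "real (Nmax m \<omega> t) - real t / real m \<le> L + 1" using bb by force
  have "Nmin m \<omega> t \<in> (\<lambda>j. snd (?s j)) ` {..<m}"
    unfolding Nmin_def uss_min_def using assms(1) by (intro Min_in) auto
  then obtain j0 where j0: "j0 < m" "snd (?s j0) = Nmin m \<omega> t" by auto
  have "(\<Sum>j<m. real (snd (?s j))) = real (snd (?s j0)) + (\<Sum>j\<in>{..<m} - {j0}. real (snd (?s j)))"
    using j0 by (subst sum.remove[of _ j0]) auto
  also have "(\<Sum>j\<in>{..<m} - {j0}. real (snd (?s j))) \<le> (\<Sum>j\<in>{..<m} - {j0}. real t / real m + L + 1)"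
    using bb by (intro sum_mono) auto
  also have "\<dots> = (real m - 1) * (real t / real m + L + 1)"
    using j0 by (simp add: of_nat_diff)
  finally have "real t \<le> real (Nmin m \<omega> t) + (real m - 1) * (real t / real m + L + 1)"
    using sum j0 by simp
  moreover have "(real m - 1) * (real t / real m) = real t - real t / real m"
    using assms(1) by (simp add: field_simps)
  ultimately have "real t / real m - real (Nmin m \<omega> t) \<le> (real m - 1) * (L + 1)"
    by (simp add: algebra_simps)
  also have "\<dots> \<le> real m * L + real m" using assms(2) by (simp add: algebra_simps)
  finally show ?thesis using 1 3 4 by simp
qed



context prob_space
begin

lemma shift_integral:
  assumes [measurable]: "f \<in> borel_measurable (stream_space M)"
  shows "(\<integral>\<^sup>+\<omega>. f (sdrop a \<omega>) \<partial>stream_space M) = (\<integral>\<^sup>+\<omega>. f \<omega> \<partial>stream_space M)"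
proof (induction a)
  case 0
  then show ?case by simp
next
  case (Suc a)
  interpret S: prob_space "stream_space M" by (rule prob_space_stream_space)
  have "(\<integral>\<^sup>+\<omega>. f (sdrop (Suc a) \<omega>) \<partial>stream_space M) = (\<integral>\<^sup>+x. (\<integral>\<^sup>+\<omega>. f (sdrop (Suc a) (x ## \<omega>)) \<partial>stream_space M) \<partial>M)"
    by (rule nn_integral_stream_space) measurable
  also have "\<dots> = (\<integral>\<^sup>+x. (\<integral>\<^sup>+\<omega>. f \<omega> \<partial>stream_space M) \<partial>M)"
    using Suc by simp
  also have "\<dots> = (\<integral>\<^sup>+\<omega>. f \<omega> \<partial>stream_space M)"
    by (simp add: emeasure_space_1)
  finally show ?case .
qed

lemma prod_integral0:
  assumes [measurable]: "\<And>i. f i \<in> borel_measurable M"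
  shows "(\<integral>\<^sup>+\<omega>. (\<Prod>i<n. f i (\<omega> !! i)) \<partial>stream_space M) = (\<Prod>i<n. \<integral>\<^sup>+x. f i x \<partial>M)"
  using assms
proof (induction n arbitrary: f)
  case 0
  interpret S: prob_space "stream_space M" by (rule prob_space_stream_space)
  show ?case by (simp add: S.emeasure_space_1)
next
  case (Suc n)
  note [measurable] = Suc.prems
  have "(\<integral>\<^sup>+\<omega>. (\<Prod>i<Suc n. f i (\<omega> !! i)) \<partial>stream_space M)
      = (\<integral>\<^sup>+x. (\<integral>\<^sup>+\<omega>. (\<Prod>i<Suc n. f i ((x ## \<omega>) !! i)) \<partial>stream_space M) \<partial>M)"
    by (rule nn_integral_stream_space) measurable
  also have "\<dots> = (\<integral>\<^sup>+x. f 0 x * (\<integral>\<^sup>+\<omega>. (\<Prod>i<n. f (Suc i) (\<omega> !! i)) \<partial>stream_space M) \<partial>M)"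
  proof -
    have eq: "(\<Prod>i<Suc n. f i ((x ## \<omega>) !! i)) = f 0 x * (\<Prod>i<n. f (Suc i) (\<omega> !! i))" for x \<omega>
      by (simp only: prod.lessThan_Suc_shift) simp
    have m: "(\<lambda>\<omega>. \<Prod>i<n. f (Suc i) (\<omega> !! i)) \<in> borel_measurable (stream_space M)" by measurable
    show ?thesis
      by (subst nn_integral_cmult[symmetric]) (simp_all only: eq m)
  qed
  also have "\<dots> = (\<integral>\<^sup>+x. f 0 x * (\<Prod>i<n. \<integral>\<^sup>+x. f (Suc i) x \<partial>M) \<partial>M)"
    using Suc.IH[of "\<lambda>i. f (Suc i)"] by simp
  also have "\<dots> = (\<integral>\<^sup>+x. f 0 x \<partial>M) * (\<Prod>i<n. \<integral>\<^sup>+x. f (Suc i) x \<partial>M)"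
    by (simp add: nn_integral_multc)
  also have "\<dots> = (\<Prod>i<Suc n. \<integral>\<^sup>+x. f i x \<partial>M)"
    by (simp only: prod.lessThan_Suc_shift)
  finally show ?case .
qed

lemma prod_integral:
  assumes [measurable]: "\<And>i. f i \<in> borel_measurable M"
  shows "(\<integral>\<^sup>+\<omega>. (\<Prod>i<n. f i (\<omega> !! (a + i))) \<partial>stream_space M) = (\<Prod>i<n. \<integral>\<^sup>+x. f i x \<partial>M)"
proof -
  have "(\<integral>\<^sup>+\<omega>. (\<Prod>i<n. f i (\<omega> !! (a + i))) \<partial>stream_space M) = (\<integral>\<^sup>+\<omega>. (\<lambda>\<omega>. \<Prod>i<n. f i (\<omega> !! i)) (sdrop a \<omega>) \<partial>stream_space M)"
    by (simp add: sdrop_snth)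
  also have "\<dots> = (\<integral>\<^sup>+\<omega>. (\<Prod>i<n. f i (\<omega> !! i)) \<partial>stream_space M)"
    by (rule shift_integral) measurable
  finally show ?thesis using prod_integral0 by simp
qed

end



lemma unif_prob: "prob_space (uniform_measure lborel {0..1::real})"
  by (intro prob_space_uniform_measure) auto

lemma row_prob: "prob_space (uss_row_measure P)"
  unfolding uss_row_measure_def
  by (intro prob_space_pair prob_space_measure_pmf unif_prob)

lemma int_fst:
  fixes h :: "nat \<Rightarrow> ennreal"
  shows "(\<integral>\<^sup>+x. h (fst x) \<partial>uss_row_measure P) = (\<integral>\<^sup>+y. h y \<partial>measure_pmf P)"
proof -
  interpret U: prob_space "uniform_measure lborel {0..1::real} \<Otimes>\<^sub>M uniform_measure lborel {0..1::real}"
    by (intro prob_space_pair unif_prob)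
  have "(\<integral>\<^sup>+x. h (fst x) \<partial>uss_row_measure P) = (\<integral>\<^sup>+y. h y \<partial>distr (uss_row_measure P) (measure_pmf P) fst)"
    unfolding uss_row_measure_def by (subst nn_integral_distr) auto
  also have "distr (uss_row_measure P) (measure_pmf P) fst = measure_pmf P"
    unfolding uss_row_measure_def by (rule U.distr_pair_fst)
  finally show ?thesis .
qed

definition fz :: "real \<Rightarrow> nat \<Rightarrow> nat \<times> real \<times> real \<Rightarrow> ennreal" where
  "fz z l x = ennreal (if fst x = l then z else 1)"
definition gz :: "real \<Rightarrow> nat \<Rightarrow> nat \<times> real \<times> real \<Rightarrow> ennreal" where
  "gz z l x = ennreal (if fst x = l then z else 0)"

lemma int_fz:
  assumes "z \<ge> 1"
  shows "(\<integral>\<^sup>+x. fz z l x \<partial>uss_row_measure P) = ennreal (1 + (z - 1) * pmf P l)"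
proof -
  have "(\<integral>\<^sup>+x. fz z l x \<partial>uss_row_measure P) = (\<integral>\<^sup>+y. (1 + ennreal (z - 1) * indicator {l} y) \<partial>measure_pmf P)"
  proof -
    have "(\<integral>\<^sup>+x. fz z l x \<partial>uss_row_measure P) = (\<integral>\<^sup>+y. ennreal (if y = l then z else 1) \<partial>measure_pmf P)"
      using int_fst[where h="\<lambda>y. ennreal (if y = l then z else 1)"] by (simp add: fz_def)
    also have "\<dots> = (\<integral>\<^sup>+y. (1 + ennreal (z - 1) * indicator {l} y) \<partial>measure_pmf P)"
    proof (intro nn_integral_cong)
      fix y show "ennreal (if y = l then z else 1) = 1 + ennreal (z - 1) * indicator {l} y"
        using assms ennreal_plus[of 1 "z - 1"] by (cases "y = l") auto
    qed
    finally show ?thesis .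
  qed
  also have "\<dots> = 1 + ennreal (z - 1) * emeasure (measure_pmf P) {l}"
    by (subst nn_integral_add) (auto simp: nn_integral_cmult_indicator measure_pmf.emeasure_space_1)
  also have "\<dots> = ennreal (1 + (z - 1) * pmf P l)"
    using assms ennreal_plus[of 1 "(z - 1) * pmf P l"] by (simp add: emeasure_pmf_single ennreal_mult[symmetric])
  finally show ?thesis .
qed

lemma int_gz:
  assumes "z \<ge> 1"
  shows "(\<integral>\<^sup>+x. gz z l x \<partial>uss_row_measure P) = ennreal (z * pmf P l)"
proof -
  have "(\<integral>\<^sup>+x. gz z l x \<partial>uss_row_measure P) = (\<integral>\<^sup>+y. ennreal z * indicator {l} y \<partial>measure_pmf P)"
  proof -
    have "(\<integral>\<^sup>+x. gz z l x \<partial>uss_row_measure P) = (\<integral>\<^sup>+y. ennreal (if y = l then z else 0) \<partial>measure_pmf P)"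
      using int_fst[where h="\<lambda>y. ennreal (if y = l then z else 0)"] by (simp add: gz_def)
    also have "\<dots> = (\<integral>\<^sup>+y. ennreal z * indicator {l} y \<partial>measure_pmf P)"
      by (intro nn_integral_cong) (auto simp: indicator_def)
    finally show ?thesis .
  qed
  also have "\<dots> = ennreal (z * pmf P l)"
    using assms by (simp add: nn_integral_cmult_indicator emeasure_pmf_single ennreal_mult)
  finally show ?thesis .
qed

lemma prod_if_single:
  assumes "j < n"
  shows "(\<Prod>i<n. if i = j then A else B) = A * B ^ (n - 1)"
proof -
  have "(\<Prod>i<n. if i = j then A else B) = (if j = j then A else B) * (\<Prod>i\<in>{..<n} - {j}. if i = j then A else B)"
    using assms by (subst prod.remove[of _ j]) auto
  also have "(\<Prod>i\<in>{..<n} - {j}. if i = j then A else B) = (\<Prod>i\<in>{..<n} - {j}. B)"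
    by (intro prod.cong) auto
  also have "\<dots> = B ^ (n - 1)" using assms by simp
  finally show ?thesis by simp
qed

definition Wz :: "real \<Rightarrow> nat \<Rightarrow> nat \<Rightarrow> nat \<Rightarrow> (nat \<times> real \<times> real) stream \<Rightarrow> ennreal" where
  "Wz z l a n \<omega> = (\<Sum>j<n. \<Prod>i<n. (if i = j then gz z l else fz z l) (\<omega> !! (a + i)))"

lemma ennreal_help:
  assumes "0 \<le> A" "0 \<le> B"
  shows "(\<Sum>j<n. ennreal A * ennreal B ^ k) = ennreal (real n * A * B ^ k)"
  using assms by (simp add: ennreal_mult ennreal_power ennreal_of_nat_eq_real_of_nat mult.assoc)

lemma fz_meas[measurable]: "fz z l \<in> borel_measurable (uss_row_measure P)"
  unfolding fz_def uss_row_measure_def by measurable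
lemma gz_meas[measurable]: "gz z l \<in> borel_measurable (uss_row_measure P)"
  unfolding gz_def uss_row_measure_def by measurable

lemma int_Wz:
  assumes "z \<ge> 1"
  shows "(\<integral>\<^sup>+\<omega>. Wz z l a n \<omega> \<partial>stream_space (uss_row_measure P))
       = ennreal (real n * z * pmf P l * (1 + (z - 1) * pmf P l) ^ (n - 1))"
proof -
  interpret R: prob_space "uss_row_measure P" by (rule row_prob)
  have meas: "(if i = j then gz z l else fz z l) \<in> borel_measurable (uss_row_measure P)" for i j :: nat
    by (cases "i = j") simp_all
  have "(\<integral>\<^sup>+\<omega>. Wz z l a n \<omega> \<partial>stream_space (uss_row_measure P))
     = (\<Sum>j<n. \<integral>\<^sup>+\<omega>. (\<Prod>i<n. (if i = j then gz z l else fz z l) (\<omega> !! (a + i))) \<partial>stream_space (uss_row_measure P))"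
    unfolding Wz_def
    by (rule nn_integral_sum) (use meas in measurable)
  also have "\<dots> = (\<Sum>j<n. \<Prod>i<n. \<integral>\<^sup>+x. (if i = j then gz z l else fz z l) x \<partial>uss_row_measure P)"
    by (intro sum.cong refl R.prod_integral meas)
  also have "\<dots> = (\<Sum>j<n. \<Prod>i<n. if i = j then ennreal (z * pmf P l) else ennreal (1 + (z - 1) * pmf P l))"
    using assms by (intro sum.cong prod.cong refl) (auto simp: int_fz int_gz)
  also have "\<dots> = (\<Sum>j<n. ennreal (z * pmf P l) * ennreal (1 + (z - 1) * pmf P l) ^ (n - 1))"
    by (intro sum.cong refl prod_if_single) auto
  also have "\<dots> = ennreal (real n * z * pmf P l * (1 + (z - 1) * pmf P l) ^ (n - 1))"
  proof -
    have p1: "0 \<le> z * pmf P l" "0 \<le> 1 + (z - 1) * pmf P l" using assms by auto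
    show ?thesis
      using ennreal_help[OF p1, where n=n and k="n - 1"] by (simp add: mult.assoc)
  qed
  finally show ?thesis .
qed



lemma prod_if_pow:
  fixes z :: real
  shows "(\<Prod>i<n. if fst (\<omega> !! (a + i)) = l then z else 1) = z ^ Xc \<omega> l a n"
  by (induction n) (auto simp: Xc_def)

lemma prod_fz:
  assumes "z \<ge> 1"
  shows "(\<Prod>i<n. fz z l (\<omega> !! (a + i))) = ennreal (z ^ Xc \<omega> l a n)"
  unfolding fz_def using assms
  by (subst prod_ennreal) (auto simp: prod_if_pow)

lemma Xc_pos:
  assumes "Xc \<omega> l a n > 0"
  shows "\<exists>j<n. fst (\<omega> !! (a + j)) = l"
proof (rule ccontr)
  assume "\<not> ?thesis"
  then have "Xc \<omega> l a n = 0" unfolding Xc_def by (intro sum.neutral) auto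
  then show False using assms by simp
qed

lemma W_ge:
  assumes "z \<ge> 1" "Xc \<omega> l a n > 0"
  shows "ennreal (z ^ Xc \<omega> l a n) \<le> Wz z l a n \<omega>"
proof -
  obtain j where j: "j < n" "fst (\<omega> !! (a + j)) = l" using Xc_pos[OF assms(2)] by blast
  have "(\<Prod>i<n. (if i = j then gz z l else fz z l) (\<omega> !! (a + i))) = (\<Prod>i<n. fz z l (\<omega> !! (a + i)))"
    using j by (intro prod.cong) (auto simp: fz_def gz_def)
  also have "\<dots> = ennreal (z ^ Xc \<omega> l a n)" using prod_fz[OF assms(1)] .
  finally have eq: "(\<Prod>i<n. (if i = j then gz z l else fz z l) (\<omega> !! (a + i))) = ennreal (z ^ Xc \<omega> l a n)" .
  have "(\<Prod>i<n. (if i = j then gz z l else fz z l) (\<omega> !! (a + i))) \<le> Wz z l a n \<omega>"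
    unfolding Wz_def using j(1) by (intro member_le_sum) auto
  then show ?thesis using eq by simp
qed

definition Bset :: "nat pmf \<Rightarrow> nat \<Rightarrow> nat \<Rightarrow> real \<Rightarrow> (nat \<times> real \<times> real) stream set" where
  "Bset P a n K = {\<omega> \<in> space (stream_space (uss_row_measure P)). \<exists>l. K < real (Xc \<omega> l a n)}"

lemma Bset_sets[measurable]: "Bset P a n K \<in> sets (stream_space (uss_row_measure P))"
  unfolding Bset_def Xc_def uss_row_measure_def by measurable

lemma Wz_meas[measurable]: "Wz z l a n \<in> borel_measurable (stream_space (uss_row_measure P))"
proof -
  have [measurable]: "(\<lambda>x. (if i = j then gz z l else fz z l) (x !! (a + i))) \<in> borel_measurable (stream_space (uss_row_measure P))" for i j :: nat
    by (cases "i = j") (simp_all add: measurable_compose[OF measurable_snth])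
  show ?thesis unfolding Wz_def by measurable
qed

lemma pointwise:
  assumes "z \<ge> 1" "K \<ge> 0"
  shows "ennreal (z powr K) * indicator (Bset P a n K) \<omega> \<le> (\<Sum>l. Wz z l a n \<omega>)"
proof (cases "\<omega> \<in> Bset P a n K")
  case True
  then obtain l where l: "K < real (Xc \<omega> l a n)" unfolding Bset_def by auto
  then have pos: "Xc \<omega> l a n > 0" using assms(2) by linarith
  have "z powr K \<le> z powr real (Xc \<omega> l a n)" using l assms(1) by (intro powr_mono) auto
  also have "\<dots> = z ^ Xc \<omega> l a n" using assms(1) by (simp add: powr_realpow)
  finally have "ennreal (z powr K) \<le> Wz z l a n \<omega>"
    using W_ge[OF assms(1) pos] order.trans ennreal_leI by blast
  also have "\<dots> \<le> (\<Sum>l. Wz z l a n \<omega>)"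
    using sum_le_suminf[OF summableI, of "{l}" "\<lambda>l. Wz z l a n \<omega>"] by simp
  finally show ?thesis using True by simp
qed simp

lemma pmf_suminf: "(\<Sum>l. ennreal (pmf P l)) = 1"
proof -
  have "(\<Sum>l. ennreal (pmf P l)) = (\<integral>\<^sup>+l. ennreal (pmf P l) \<partial>count_space UNIV)"
    by (simp add: nn_integral_count_space_nat)
  also have "\<dots> = emeasure (measure_pmf P) UNIV" by (rule nn_integral_pmf)
  also have "\<dots> = 1" using measure_pmf.emeasure_space_1[of P] by simp
  finally show ?thesis .
qed

lemma real_ineq:
  fixes z p q :: real
  assumes "z \<ge> 1" "0 \<le> p" "p \<le> q"
  shows "real n * z * p * (1 + (z - 1) * p) ^ (n - 1) \<le> p * (real n * z * (1 + (z - 1) * q) ^ (n - 1))"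
proof -
  have "(1 + (z - 1) * p) ^ (n - 1) \<le> (1 + (z - 1) * q) ^ (n - 1)"
    using assms by (intro power_mono) (auto intro!: mult_left_mono)
  then have "(real n * z * p) * (1 + (z - 1) * p) ^ (n - 1) \<le> (real n * z * p) * (1 + (z - 1) * q) ^ (n - 1)"
    using assms by (intro mult_left_mono) auto
  then show ?thesis by (simp add: algebra_simps)
qed

lemma meas_B:
  assumes "z \<ge> 1" "K \<ge> 0" "\<And>l. pmf P l \<le> q"
  shows "measure (stream_space (uss_row_measure P)) (Bset P a n K) * z powr K \<le> real n * z * (1 + (z - 1) * q) ^ (n - 1)"
proof -
  interpret R: prob_space "uss_row_measure P" by (rule row_prob)
  interpret S: prob_space "stream_space (uss_row_measure P)" by (rule R.prob_space_stream_space)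
  define C where "C = real n * z * (1 + (z - 1) * q) ^ (n - 1)"
  have q0: "0 \<le> q" using assms(3)[of 0] pmf_nonneg[of P 0] by linarith
  have C0: "0 \<le> C" unfolding C_def using assms(1) q0 by auto
  have "ennreal (z powr K) * emeasure (stream_space (uss_row_measure P)) (Bset P a n K)
      = (\<integral>\<^sup>+\<omega>. ennreal (z powr K) * indicator (Bset P a n K) \<omega> \<partial>stream_space (uss_row_measure P))"
    by (simp add: nn_integral_cmult_indicator)
  also have "\<dots> \<le> (\<integral>\<^sup>+\<omega>. (\<Sum>l. Wz z l a n \<omega>) \<partial>stream_space (uss_row_measure P))"
    by (intro nn_integral_mono pointwise assms(1,2))
  also have "\<dots> = (\<Sum>l. \<integral>\<^sup>+\<omega>. Wz z l a n \<omega> \<partial>stream_space (uss_row_measure P))"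
    by (rule nn_integral_suminf) simp
  also have "\<dots> = (\<Sum>l. ennreal (real n * z * pmf P l * (1 + (z - 1) * pmf P l) ^ (n - 1)))"
    using int_Wz[OF assms(1)] by simp
  also have "\<dots> \<le> (\<Sum>l. ennreal (pmf P l) * ennreal C)"
  proof (intro suminf_le summableI)
    fix l
    show "ennreal (real n * z * pmf P l * (1 + (z - 1) * pmf P l) ^ (n - 1)) \<le> ennreal (pmf P l) * ennreal C"
      unfolding C_def using real_ineq[OF assms(1) pmf_nonneg assms(3), of n l] C0
      by (simp add: ennreal_mult'[symmetric] ennreal_leI C_def)
  qed
  also have "\<dots> = ennreal C" by (simp add: pmf_suminf)
  finally have "ennreal (z powr K * measure (stream_space (uss_row_measure P)) (Bset P a n K)) \<le> ennreal C"
    by (simp add: S.emeasure_eq_measure ennreal_mult)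
  then show ?thesis using C0 by (simp add: C_def mult.commute)
qed



lemma z_choice:
  fixes q :: real and m :: nat
  assumes "m > 0" "0 \<le> q" "q < 1 / real m"
  shows "\<exists>z. 1 < z \<and> 1 + (z - 1) * q \<le> z powr (1 / real m)"
proof -
  define r where "r = max (q * real m) (1/2)"
  have qm: "q * real m < 1" using assms by (simp add: field_simps)
  have r: "1/2 \<le> r" "r < 1" "q * real m \<le> r" using qm unfolding r_def by auto
  define z where "z = 1 / r"
  have z1: "1 < z" using r unfolding z_def by (simp add: field_simps)
  have zr: "z * r = 1" using r unfolding z_def by simp
  have "(z - 1) * q \<le> (z - 1) * (r / real m)"
    using z1 r assms(1) by (intro mult_left_mono) (auto simp: field_simps)
  also have "\<dots> = (1 - r) / real m" using zr by (simp add: algebra_simps)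
  also have "\<dots> \<le> ln z / real m"
  proof -
    have "ln r \<le> r - 1" using r by (intro ln_le_minus_one) auto
    moreover have "ln z = - ln r" unfolding z_def using r by (simp add: ln_div)
    ultimately show ?thesis using assms(1) by (intro divide_right_mono) auto
  qed
  finally have "1 + (z - 1) * q \<le> 1 + ln z / real m" by simp
  also have "\<dots> \<le> exp (ln z / real m)" by (rule exp_ge_add_one_self)
  also have "\<dots> = z powr (1 / real m)" using z1 by (simp add: powr_def)
  finally show ?thesis using z1 by blast
qed

lemma meas_B2:
  assumes "z > 1" "1 + (z - 1) * q \<le> z powr (1 / real m)" "L \<ge> 0" "\<And>l. pmf P l \<le> q"
  shows "measure (stream_space (uss_row_measure P)) (Bset P a n (real n / real m + L)) \<le> real n * z / z powr L"
proof -
  have q0: "0 \<le> q" using assms(4)[of 0] pmf_nonneg[of P 0] by linarith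
  have K0: "0 \<le> real n / real m + L" using assms(3) by auto
  have "(1 + (z - 1) * q) ^ (n - 1) \<le> (1 + (z - 1) * q) ^ n"
    using assms(1) q0 by (intro power_increasing) auto
  also have "\<dots> \<le> (z powr (1 / real m)) ^ n"
    using assms(1,2) q0 by (intro power_mono) auto
  also have "\<dots> = z powr (real n / real m)"
    using assms(1) by (simp add: powr_realpow[symmetric] powr_powr)
  finally have pw: "(1 + (z - 1) * q) ^ (n - 1) \<le> z powr (real n / real m)" .
  have "measure (stream_space (uss_row_measure P)) (Bset P a n (real n / real m + L)) * z powr (real n / real m + L)
        \<le> real n * z * (1 + (z - 1) * q) ^ (n - 1)"
    using meas_B[of z "real n / real m + L" P q a n] assms K0 by auto
  also have "\<dots> \<le> real n * z * z powr (real n / real m)"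
    using pw assms(1) by (intro mult_left_mono) auto
  finally have "measure (stream_space (uss_row_measure P)) (Bset P a n (real n / real m + L)) * (z powr (real n / real m) * z powr L)
        \<le> (real n * z / z powr L) * (z powr (real n / real m) * z powr L)"
    using assms(1) by (simp add: powr_add)
  then show ?thesis
    using assms(1) by (subst (asm) mult_le_cancel_right_pos) auto
qed

lemma summ:
  fixes z :: real
  assumes "z > 1"
  shows "summable (\<lambda>t. real (Suc t) * real t * z / z powr ((ln (real t))^2))"
proof (rule summable_comparison_test_ev)
  show "summable (\<lambda>t. 2 * z * inverse (real t ^ 2))"
    by (intro summable_mult inverse_power_summable) auto
  define N where "N = nat \<lceil>exp (4 / ln z)\<rceil> + 1"
  have lz: "ln z > 0" using assms by simp
  show "\<forall>\<^sub>F t in sequentially. norm (real (Suc t) * real t * z / z powr (ln (real t))\<^sup>2) \<le> 2 * z * inverse (real t ^ 2)"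
    using eventually_ge_at_top[of N]
  proof (rule eventually_mono)
    fix t assume tN: "N \<le> t"
    have t1: "real t \<ge> 1" using tN unfolding N_def by auto
    have "exp (4 / ln z) \<le> real t" using tN unfolding N_def by linarith
    then have "4 / ln z \<le> ln (real t)" using t1 by (metis exp_le_cancel_iff exp_ln_iff order.strict_trans2 zero_less_one less_le_trans t1 exp_ln linorder_not_le)
    then have lt: "4 \<le> ln (real t) * ln z" using lz by (simp add: field_simps)
    have lt0: "0 \<le> ln (real t)" using t1 by simp
    have "real t ^ 4 = exp (4 * ln (real t))" using t1 powr_realpow[of "real t" 4] by (simp add: powr_def)
    also have "\<dots> \<le> exp ((ln (real t))^2 * ln z)"
      using mult_left_mono[OF lt lt0] by (simp add: power2_eq_square algebra_simps)
    also have "\<dots> = z powr ((ln (real t))^2)" using assms by (simp add: powr_def)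
    finally have t4: "real t ^ 4 \<le> z powr ((ln (real t))^2)" .
    have pos: "0 < real t ^ 4" using t1 by simp
    have "real (Suc t) * real t * z / z powr (ln (real t))\<^sup>2 \<le> real (Suc t) * real t * z / real t ^ 4"
      using t4 pos assms t1 by (intro divide_left_mono) auto
    also have "\<dots> \<le> (2 * real t) * real t * z / real t ^ 4"
      using t1 assms pos by (intro divide_right_mono mult_right_mono) auto
    also have "\<dots> = 2 * z * inverse (real t ^ 2)"
      using t1 by (simp add: field_simps power2_eq_square power4_eq_xxxx)
    finally show "norm (real (Suc t) * real t * z / z powr (ln (real t))\<^sup>2) \<le> 2 * z * inverse (real t ^ 2)"
      using assms t1 by simp
  qed
qed



theorem lemma3:
  fixes P :: "nat pmf" and m :: nat
  assumes "m > 0"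
    and "\<And>i. pmf P (Suc i) \<le> pmf P i"
    and "pmf P 0 < 1 / real m"
  shows "AE \<omega> in stream_space (uss_row_measure P).
           eventually (\<lambda>t.
               0 \<le> real t / real m - real (Nmin m \<omega> t)
             \<and> real t / real m - real (Nmin m \<omega> t) \<le> real m * (ln (real t))^2 + real m
             \<and> 0 \<le> real (Nmax m \<omega> t) - real t / real m
             \<and> real (Nmax m \<omega> t) - real t / real m \<le> (ln (real t))^2 + 1) sequentially"
proof -
  interpret R: prob_space "uss_row_measure P" by (rule row_prob)
  interpret S: prob_space "stream_space (uss_row_measure P)" by (rule R.prob_space_stream_space)
  define q where "q = pmf P 0"
  have hq0: "pmf P l \<le> pmf P 0" for l
    by (induction l) (auto intro: order.trans[OF assms(2)])
  have hq: "\<And>l. pmf P l \<le> q" unfolding q_def by (rule hq0)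
  obtain z where z: "1 < z" "1 + (z - 1) * q \<le> z powr (1 / real m)"
    using z_choice[OF assms(1) pmf_nonneg assms(3)] unfolding q_def by blast
  define A where "A t = (\<Union>a\<in>{..t}. Bset P a (t - a) (real (t - a) / real m + (ln (real t))^2))" for t
  have Asets[measurable]: "A t \<in> sets (stream_space (uss_row_measure P))" for t
    unfolding A_def by (intro sets.finite_UN) auto
  have Ameas: "measure (stream_space (uss_row_measure P)) (A t) \<le> real (Suc t) * real t * z / z powr ((ln (real t))^2)" for t
  proof -
    let ?L = "(ln (real t))^2"
    have "measure (stream_space (uss_row_measure P)) (A t)
        \<le> (\<Sum>a\<in>{..t}. measure (stream_space (uss_row_measure P)) (Bset P a (t - a) (real (t - a) / real m + ?L)))"
      unfolding A_def by (intro measure_subadditive_finite) (auto simp: S.emeasure_eq_measure)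
    also have "\<dots> \<le> (\<Sum>a\<in>{..t}. real t * z / z powr ?L)"
    proof (intro sum_mono)
      fix a assume "a \<in> {..t}"
      have "measure (stream_space (uss_row_measure P)) (Bset P a (t - a) (real (t - a) / real m + ?L)) \<le> real (t - a) * z / z powr ?L"
        by (rule meas_B2[OF z _ hq]) simp
      also have "\<dots> \<le> real t * z / z powr ?L"
        using z by (intro divide_right_mono mult_right_mono) auto
      finally show "measure (stream_space (uss_row_measure P)) (Bset P a (t - a) (real (t - a) / real m + ?L)) \<le> real t * z / z powr ?L" .
    qed
    also have "\<dots> = real (Suc t) * real t * z / z powr ?L" by simp
    finally show ?thesis .
  qed
  have summ_A: "summable (\<lambda>t. measure (stream_space (uss_row_measure P)) (A t))"
  proof -
    have "\<forall>t. norm (measure (stream_space (uss_row_measure P)) (A t)) \<le> real (Suc t) * real t * z / z powr ((ln (real t))^2)"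
      using Ameas by simp
    then show ?thesis by (rule summable_comparison_test_ev[OF always_eventually summ[OF z(1)]])
  qed
  have bc: "AE \<omega> in stream_space (uss_row_measure P).
      eventually (\<lambda>t. \<omega> \<in> space (stream_space (uss_row_measure P)) - A t) sequentially"
    by (rule borel_cantelli_AE1) (auto simp: summ_A S.emeasure_eq_measure)
  show ?thesis
  proof (rule eventually_mono[OF bc])
    fix \<omega> assume ev: "eventually (\<lambda>t. \<omega> \<in> space (stream_space (uss_row_measure P)) - A t) sequentially"
    show "eventually (\<lambda>t.
               0 \<le> real t / real m - real (Nmin m \<omega> t)
             \<and> real t / real m - real (Nmin m \<omega> t) \<le> real m * (ln (real t))^2 + real m
             \<and> 0 \<le> real (Nmax m \<omega> t) - real t / real m
             \<and> real (Nmax m \<omega> t) - real t / real m \<le> (ln (real t))^2 + 1) sequentially"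
    proof (rule eventually_mono[OF ev])
      fix t assume t: "\<omega> \<in> space (stream_space (uss_row_measure P)) - A t"
      have good: "\<forall>a\<le>t. \<forall>l. real (Xc \<omega> l a (t - a)) \<le> real (t - a) / real m + (ln (real t))^2"
        using t unfolding A_def Bset_def by (auto simp: not_less)
      show "0 \<le> real t / real m - real (Nmin m \<omega> t)
             \<and> real t / real m - real (Nmin m \<omega> t) \<le> real m * (ln (real t))^2 + real m
             \<and> 0 \<le> real (Nmax m \<omega> t) - real t / real m
             \<and> real (Nmax m \<omega> t) - real t / real m \<le> (ln (real t))^2 + 1"
        by (rule det_final[OF assms(1) _ good]) simp
    qed
  qed
qed


end
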